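(* Let $j,s,d,t$ be positive integers with $s>dt$, $q$ a prime power, $\mathcal{C}\subseteq\mathbb{F}_q^{js}$ a linear code of dimension $j(s-dt)$, and $\mathcal{L}:[js]\to[s]$ a labeling with $\Delta_{\mathcal{L}}(\mathcal{C})\ge dt+1$. Let $G\in\mathbb{F}_q^{j(s-dt)\times js}$ be any generator matrix of $\mathcal{C}$, and for $\Lambda\subseteq[s]$ let $G(\Lambda)$ be the submatrix of $G$ consisting of the columns $i\in[js]$ with $\mathcal{L}(i)\in\Lambda$. Then for every $\Lambda\subseteq[s]$ with $|\Lambda|=s-dt$, $G(\Lambda)$ is a square $j(s-dt)\times j(s-dt)$ matrix and $\det G(\Lambda)\neq0$.
   Context: A labeling is a surjection $\mathcal{L}:[n]\to[s]$. Labelweight: for $\mathbf{c}\in\mathbb{F}^n$, $\Delta_{\mathcal{L}}(\mathbf{c})=|\{\mathcal{L}(i): c_i\neq0\}|$; for a code $\mathcal{C}$, $\Delta_{\mathcal{L}}(\mathcal{C})=\min_{\mathbf{0}\ne\mathbf{c}\in\mathcal{C}}\Delta_{\mathcal{L}}(\mathbf{c})$. A generator matrix of $\mathcal{C}$ is a matrix whose row span is $\mathcal{C}$ and whose number of rows equals $\dim\mathcal{C}$. *)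

theory Defs
  imports "Jordan_Normal_Form.Determinant" "Jordan_Normal_Form.DL_Submatrix"
begin

text \<open>Vectors of length n over a field are elements of carrier_vec n; coordinates are
indexed by 0..n-1 and labels by 0..s-1 (0-based versions of [n] and [s]).\<close>

definition is_labeling :: "nat \<Rightarrow> nat \<Rightarrow> (nat \<Rightarrow> nat) \<Rightarrow> bool" where
  "is_labeling n s L \<longleftrightarrow> L ` {..<n} = {..<s}"

definition is_linear_code :: "nat \<Rightarrow> 'a :: field vec set \<Rightarrow> bool" where
  "is_linear_code n C \<longleftrightarrow> C \<subseteq> carrier_vec n \<and> 0\<^sub>v n \<in> C \<and>
     (\<forall>u\<in>C. \<forall>v\<in>C. u + v \<in> C) \<and> (\<forall>a. \<forall>u\<in>C. a \<cdot>\<^sub>v u \<in> C)"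

definition row_span :: "'a :: field mat \<Rightarrow> 'a vec set" where
  "row_span G = {transpose_mat G *\<^sub>v x | x. x \<in> carrier_vec (dim_row G)}"

definition code_dim :: "nat \<Rightarrow> 'a :: field vec set \<Rightarrow> nat" where
  "code_dim n C = (LEAST k. \<exists>G \<in> carrier_mat k n. row_span G = C)"

definition is_generator_matrix :: "nat \<Rightarrow> 'a :: field vec set \<Rightarrow> 'a mat \<Rightarrow> bool" where
  "is_generator_matrix n C G \<longleftrightarrow> G \<in> carrier_mat (code_dim n C) n \<and> row_span G = C"

definition labelweight :: "nat \<Rightarrow> (nat \<Rightarrow> nat) \<Rightarrow> 'a :: zero vec \<Rightarrow> nat" where
  "labelweight n L c = card {L i | i. i < n \<and> c $ i \<noteq> 0}"

definition code_labelweight :: "nat \<Rightarrow> (nat \<Rightarrow> nat) \<Rightarrow> 'a :: zero vec set \<Rightarrow> nat" where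
  "code_labelweight n L C = Min {labelweight n L c | c. c \<in> C \<and> c \<noteq> 0\<^sub>v n}"

text \<open>G(Lambda): columns i with L i in Lambda, in increasing order.\<close>
definition label_submatrix :: "'a mat \<Rightarrow> (nat \<Rightarrow> nat) \<Rightarrow> nat set \<Rightarrow> 'a mat" where
  "label_submatrix G L \<Lambda> = submatrix G {..<dim_row G} {i. i < dim_col G \<and> L i \<in> \<Lambda>}"

end

theory Submission
  imports Defs
begin

lemma swap_card:
  fixes S :: "'b set"
  assumes "x \<in> S" "y \<in> S"
  shows "card {E. (E \<subseteq> S \<and> card E = p) \<and> x \<in> E} = card {E. (E \<subseteq> S \<and> card E = p) \<and> y \<in> E}"
proof -
  define \<sigma> where "\<sigma> z = (if z = x then y else if z = y then x else z)" for z
  have ss: "\<sigma> (\<sigma> z) = z" for z unfolding \<sigma>_def by auto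
  have inj: "inj \<sigma>" by (metis injI ss)
  have iS: "\<sigma> ` E \<subseteq> S" if "E \<subseteq> S" for E using that assms unfolding \<sigma>_def by auto
  have ii: "\<sigma> ` (\<sigma> ` E) = E" for E by (simp add: image_comp ss comp_def)
  have cE: "card (\<sigma> ` E) = card E" for E using inj by (simp add: card_image inj_on_subset)
  have img: "image \<sigma> ` {E. (E \<subseteq> S \<and> card E = p) \<and> x \<in> E} = {E. (E \<subseteq> S \<and> card E = p) \<and> y \<in> E}"
  proof (rule subset_antisym; rule subsetI)
    fix E' assume "E' \<in> image \<sigma> ` {E. (E \<subseteq> S \<and> card E = p) \<and> x \<in> E}"
    then obtain E where E: "E \<subseteq> S" "card E = p" "x \<in> E" "E' = \<sigma> ` E" by auto
    have "y = \<sigma> x" unfolding \<sigma>_def by auto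
    then show "E' \<in> {E. (E \<subseteq> S \<and> card E = p) \<and> y \<in> E}" using E iS cE by auto
  next
    fix E' assume "E' \<in> {E. (E \<subseteq> S \<and> card E = p) \<and> y \<in> E}"
    then have E: "E' \<subseteq> S" "card E' = p" "y \<in> E'" by auto
    have "x = \<sigma> y" unfolding \<sigma>_def by auto
    then have "\<sigma> ` E' \<in> {E. (E \<subseteq> S \<and> card E = p) \<and> x \<in> E}" using E iS cE by auto
    then show "E' \<in> image \<sigma> ` {E. (E \<subseteq> S \<and> card E = p) \<and> x \<in> E}" using ii[of E'] by (metis image_eqI)
  qed
  have "inj_on (image \<sigma>) X" for X by (metis ii inj_onI)
  then have "card (image \<sigma> ` {E. (E \<subseteq> S \<and> card E = p) \<and> x \<in> E}) = card {E. (E \<subseteq> S \<and> card E = p) \<and> x \<in> E}"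
    by (rule card_image)
  then show ?thesis unfolding img by simp
qed

lemma avg:
  fixes f :: "'b \<Rightarrow> nat"
  assumes fin: "finite S" and ge: "\<And>D. D \<subseteq> S \<Longrightarrow> card D = p \<Longrightarrow> a*p \<le> sum f D"
    and tot: "sum f S = a * card S" and D: "D \<subseteq> S" "card D = p"
  shows "sum f D = a*p"
proof (cases "S = {}")
  case True
  then show ?thesis using D by auto
next
  case False
  then obtain l0 where l0: "l0 \<in> S" by auto
  define DD where "DD = {D. D \<subseteq> S \<and> card D = p}"
  have fD: "finite DD" unfolding DD_def using fin by (auto intro: finite_subset[of _ "Pow S"])
  define c where "c = card {E. E \<in> DD \<and> l0 \<in> E}"
  have cl: "card {E. E \<in> DD \<and> l \<in> E} = c" if "l \<in> S" for l
    unfolding c_def DD_def using swap_card[OF that l0] by simp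
  have sw: "(\<Sum>E\<in>DD. sum g E) = (\<Sum>l\<in>S. g l * c)" for g :: "'b \<Rightarrow> nat"
  proof -
    have "(\<Sum>E\<in>DD. sum g E) = (\<Sum>E\<in>DD. \<Sum>l\<in>{l\<in>S. l \<in> E}. g l)"
      by (rule sum.cong) (auto simp: DD_def intro!: sum.cong)
    also have "\<dots> = (\<Sum>l\<in>S. \<Sum>E\<in>{E\<in>DD. l \<in> E}. g l)"
      by (rule sum.swap_restrict[OF fD fin])
    also have "\<dots> = (\<Sum>l\<in>S. g l * c)"
      by (rule sum.cong) (auto simp: cl)
    finally show ?thesis .
  qed
  have e1: "(\<Sum>E\<in>DD. sum f E) = a * card S * c" using sw[of f] tot
    by (simp add: sum_distrib_right[symmetric])
  have e2: "(\<Sum>E\<in>DD. a*p) = a * card S * c"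
  proof -
    have "(\<Sum>E\<in>DD. a*p) = (\<Sum>E\<in>DD. sum (\<lambda>_. a) E)"
      by (rule sum.cong) (auto simp: DD_def)
    then show ?thesis using sw[of "\<lambda>_. a"] by simp
  qed
  show ?thesis
  proof (rule ccontr)
    assume "sum f D \<noteq> a*p"
    then have "a*p < sum f D" using ge[OF D] by auto
    then have "(\<Sum>E\<in>DD. a*p) < (\<Sum>E\<in>DD. sum f E)"
      using D ge by (intro sum_strict_mono_ex1[OF fD]) (auto simp: DD_def)
    then show False using e1 e2 by simp
  qed
qed

lemma tmv:
  assumes "G \<in> carrier_mat k n" "x \<in> carrier_vec k" "c < n"
  shows "(transpose_mat G *\<^sub>v x) $ c = (\<Sum>r<k. G $$ (r,c) * x $ r)"
  using assms by (auto simp: scalar_prod_def atLeast0LessThan intro!: sum.cong)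

lemma sumdel:
  fixes f :: "nat \<Rightarrow> 'a::comm_monoid_add"
  assumes "i < k"
  shows "(\<Sum>r<k. f r) = f i + (\<Sum>r<k-1. f (if r < i then r else Suc r))"
proof -
  define del where "del r = (if r < i then r else Suc r)" for r
  have inj: "inj_on del {..<k-1}" unfolding del_def inj_on_def by auto
  have im: "del ` {..<k-1} = {..<k} - {i}"
  proof (rule subset_antisym; rule subsetI)
    fix x assume "x \<in> del ` {..<k-1}" then show "x \<in> {..<k} - {i}" using assms unfolding del_def by auto
  next
    fix x assume x: "x \<in> {..<k} - {i}"
    show "x \<in> del ` {..<k-1}"
    proof (cases "x < i")
      case True then show ?thesis using x assms unfolding del_def by (auto intro!: image_eqI[of _ _ x])
    next
      case False then have "x = del (x - 1)" "x - 1 < k - 1" using x unfolding del_def by auto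
      then show ?thesis by blast
    qed
  qed
  have "(\<Sum>r<k. f r) = f i + (\<Sum>r\<in>{..<k} - {i}. f r)"
    using assms by (simp add: sum.remove)
  also have "(\<Sum>r\<in>{..<k} - {i}. f r) = (\<Sum>r<k-1. f (del r))"
    using sum.reindex[OF inj, of f] im by simp
  finally show ?thesis unfolding del_def .
qed

lemma indep:
  fixes G :: "'a::field mat"
  assumes G: "G \<in> carrier_mat k n" and cd: "code_dim n C = k" and rs: "row_span G = C"
    and x: "x \<in> carrier_vec k" and z: "transpose_mat G *\<^sub>v x = 0\<^sub>v n"
  shows "x = 0\<^sub>v k"
proof (rule ccontr)
  assume "x \<noteq> 0\<^sub>v k"
  then obtain i where i: "i < k" "x $ i \<noteq> 0" using x by (metis eq_vecI carrier_vecD index_zero_vec(1) index_zero_vec(2))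
  define del where "del r = (if r < i then r else Suc r)" for r
  define G' where "G' = mat (k-1) n (\<lambda>(r,c). G $$ (del r, c))"
  have G': "G' \<in> carrier_mat (k-1) n" unfolding G'_def by simp
  have delk: "r < k - 1 \<Longrightarrow> del r < k" for r unfolding del_def by auto
  have zc: "(\<Sum>r<k. G $$ (r,c) * x $ r) = 0" if "c < n" for c
    using tmv[OF G x that] z that by simp
  have "row_span G' = row_span G"
  proof (rule subset_antisym; rule subsetI)
    fix u assume "u \<in> row_span G'"
    then obtain y where y: "y \<in> carrier_vec (k-1)" "u = transpose_mat G' *\<^sub>v y"
      unfolding row_span_def using G' by auto
    define y' where "y' = vec k (\<lambda>r. if r = i then 0 else y $ (if r < i then r else r - 1))"
    have y': "y' \<in> carrier_vec k" unfolding y'_def by simp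
    have "u = transpose_mat G *\<^sub>v y'"
    proof (rule eq_vecI)
      show "dim_vec u = dim_vec (transpose_mat G *\<^sub>v y')" using y G G' by simp
      fix c assume "c < dim_vec (transpose_mat G *\<^sub>v y')"
      then have c: "c < n" using G by simp
      have "(transpose_mat G *\<^sub>v y') $ c = (\<Sum>r<k. G $$ (r,c) * y' $ r)" by (rule tmv[OF G y' c])
      also have "\<dots> = G $$ (i,c) * y' $ i + (\<Sum>r<k-1. G $$ (del r,c) * y' $ (del r))"
        using sumdel[OF i(1)] unfolding del_def by blast
      also have "G $$ (i,c) * y' $ i = 0" using i unfolding y'_def by simp
      also have "(\<Sum>r<k-1. G $$ (del r,c) * y' $ (del r)) = (\<Sum>r<k-1. G' $$ (r,c) * y $ r)"
      proof (rule sum.cong)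
        fix r assume "r \<in> {..<k-1}"
        then have r: "r < k - 1" by simp
        have "y' $ (del r) = y $ r" using delk[OF r] unfolding y'_def del_def by auto
        moreover have "G' $$ (r,c) = G $$ (del r, c)" using r c unfolding G'_def by simp
        ultimately show "G $$ (del r,c) * y' $ (del r) = G' $$ (r,c) * y $ r" by simp
      qed simp
      also have "\<dots> = u $ c" using tmv[OF G' y(1) c] y(2) by simp
      finally show "u $ c = (transpose_mat G *\<^sub>v y') $ c" by simp
    qed
    then show "u \<in> row_span G" unfolding row_span_def using y' G by auto
  next
    fix u assume "u \<in> row_span G"
    then obtain w where w: "w \<in> carrier_vec k" "u = transpose_mat G *\<^sub>v w"
      unfolding row_span_def using G by auto
    define a where "a = w $ i / x $ i"
    define w' where "w' = vec (k-1) (\<lambda>r. w $ del r - a * x $ del r)"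
    have w': "w' \<in> carrier_vec (k-1)" unfolding w'_def by simp
    have "u = transpose_mat G' *\<^sub>v w'"
    proof (rule eq_vecI)
      show "dim_vec u = dim_vec (transpose_mat G' *\<^sub>v w')" using w G G' by simp
      fix c assume "c < dim_vec (transpose_mat G' *\<^sub>v w')"
      then have c: "c < n" using G' by simp
      have "u $ c = (\<Sum>r<k. G $$ (r,c) * w $ r)" using tmv[OF G w(1) c] w(2) by simp
      also have "\<dots> = (\<Sum>r<k. G $$ (r,c) * w $ r) - a * (\<Sum>r<k. G $$ (r,c) * x $ r)"
        using zc[OF c] by simp
      also have "\<dots> = (\<Sum>r<k. G $$ (r,c) * (w $ r - a * x $ r))"
        by (simp add: sum_subtractf sum_distrib_left algebra_simps)
      also have "\<dots> = G $$ (i,c) * (w $ i - a * x $ i) + (\<Sum>r<k-1. G $$ (del r,c) * (w $ del r - a * x $ del r))"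
        using sumdel[OF i(1)] unfolding del_def by blast
      also have "w $ i - a * x $ i = 0" unfolding a_def using i by simp
      also have "(\<Sum>r<k-1. G $$ (del r,c) * (w $ del r - a * x $ del r)) = (\<Sum>r<k-1. G' $$ (r,c) * w' $ r)"
        using delk c unfolding w'_def G'_def by (auto intro!: sum.cong)
      also have "\<dots> = (transpose_mat G' *\<^sub>v w') $ c" using tmv[OF G' w' c] by simp
      finally show "u $ c = (transpose_mat G' *\<^sub>v w') $ c" by simp
    qed
    then show "u \<in> row_span G'" unfolding row_span_def using w' G' by auto
  qed
  then have "\<exists>H\<in>carrier_mat (k-1) n. row_span H = C" using G' rs by blast
  then have "code_dim n C \<le> k - 1" unfolding code_dim_def by (rule Least_le)
  then show False using cd i by simp
qed

lemma pick_lt: "r < k \<Longrightarrow> pick {..<k} r = r"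
proof -
  assume r: "r < k"
  have "{a\<in>{..<k}. a < r} = {..<r}" using r by auto
  then show ?thesis using pick_card_in_set[of r "{..<k}"] r by simp
qed

lemma subm:
  fixes G :: "'a::field mat"
  assumes G: "G \<in> carrier_mat k n" and J: "J \<subseteq> {..<n}"
  shows "submatrix G {..<k} J \<in> carrier_mat k (card J)"
    and "v \<in> carrier_vec k \<Longrightarrow> c < card J \<Longrightarrow>
      (transpose_mat (submatrix G {..<k} J) *\<^sub>v v) $ c = (transpose_mat G *\<^sub>v v) $ (pick J c)"
proof -
  have e1: "{i. i < dim_row G \<and> i \<in> {..<k}} = {..<k}" using G by auto
  have e2: "{j. j < dim_col G \<and> j \<in> J} = J" using G J by auto
  show cm: "submatrix G {..<k} J \<in> carrier_mat k (card J)"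
    using dim_submatrix(1)[of G "{..<k}" J, unfolded e1] dim_submatrix(2)[of G "{..<k}" J, unfolded e2]
    unfolding carrier_mat_def by simp
  assume v: "v \<in> carrier_vec k" and c: "c < card J"
  have fJ: "finite J" using J finite_subset by blast
  have pj: "pick J c < n" using pick_in_set[of c J] c J by auto
  have "(transpose_mat (submatrix G {..<k} J) *\<^sub>v v) $ c = (\<Sum>r<k. submatrix G {..<k} J $$ (r,c) * v $ r)"
    by (rule tmv[OF cm v c])
  also have "\<dots> = (\<Sum>r<k. G $$ (r, pick J c) * v $ r)"
  proof (rule sum.cong)
    fix r assume "r \<in> {..<k}"
    then have r: "r < k" by simp
    have "submatrix G {..<k} J $$ (r,c) = G $$ (pick {..<k} r, pick J c)"
      by (rule submatrix_index) (use r c e1 e2 in auto)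
    then show "submatrix G {..<k} J $$ (r,c) * v $ r = G $$ (r, pick J c) * v $ r" using pick_lt[OF r] by simp
  qed simp
  also have "\<dots> = (transpose_mat G *\<^sub>v v) $ (pick J c)" using tmv[OF G v pj] by simp
  finally show "(transpose_mat (submatrix G {..<k} J) *\<^sub>v v) $ c = (transpose_mat G *\<^sub>v v) $ (pick J c)" .
qed

lemma pick_inv:
  assumes "finite J" "i \<in> J"
  shows "card {a\<in>J. a < i} < card J" "pick J (card {a\<in>J. a < i}) = i"
proof -
  have "{a\<in>J. a < i} \<subset> J" using assms by auto
  then show "card {a\<in>J. a < i} < card J" using assms(1) by (simp add: psubset_card_mono)
  show "pick J (card {a\<in>J. a < i}) = i" using pick_card_in_set assms by auto
qed

theorem mainTheorem5:
  fixes j s d t :: nat and C :: "'a :: {finite, field} vec set"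
    and L :: "nat \<Rightarrow> nat" and G :: "'a mat"
  assumes "j > 0" "s > 0" "d > 0" "t > 0" "s > d * t"
    and "is_linear_code (j * s) C"
    and "code_dim (j * s) C = j * (s - d * t)"
    and "is_labeling (j * s) s L"
    and "code_labelweight (j * s) L C \<ge> d * t + 1"
    and "is_generator_matrix (j * s) C G"
  shows "\<forall>\<Lambda>. \<Lambda> \<subseteq> {..<s} \<and> card \<Lambda> = s - d * t \<longrightarrow>
           label_submatrix G L \<Lambda> \<in> carrier_mat (j * (s - d * t)) (j * (s - d * t)) \<and>
           det (label_submatrix G L \<Lambda>) \<noteq> 0"
proof -
  define n where "n = j * s"
  define m where "m = d * t"
  define k where "k = j * (s - m)"
  have G: "G \<in> carrier_mat k n" and rs: "row_span G = C"
    using assms(7,10) unfolding is_generator_matrix_def n_def k_def m_def by auto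
  have cd: "code_dim n C = k" using assms(7) unfolding n_def k_def m_def by simp
  have kpos: "k > 0" using assms(1,5) unfolding k_def m_def by simp
  have ms: "m < s" using assms(5) unfolding m_def by simp
  have Lf: "L i < s" if "i < n" for i using assms(8) that unfolding is_labeling_def n_def by auto
  have Lim: "L ` {..<n} = {..<s}" using assms(8) unfolding is_labeling_def n_def by auto
  have clw: "m + 1 \<le> code_labelweight n L C" using assms(9) unfolding n_def m_def by simp
  define J where "J X = {i. i < n \<and> L i \<in> X}" for X
  have fJ: "finite (J X)" for X unfolding J_def by auto
  have JS: "J X \<subseteq> {..<n}" for X unfolding J_def by auto
  have claimA: "x = 0\<^sub>v k" if X: "X \<subseteq> {..<s}" "card X = s - m" and x: "x \<in> carrier_vec k"
    and z: "\<forall>i\<in>J X. (transpose_mat G *\<^sub>v x) $ i = 0" for X x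
  proof -
    define c where "c = transpose_mat G *\<^sub>v x"
    have cC: "c \<in> C" unfolding c_def rs[symmetric] row_span_def using x G by auto
    show ?thesis
    proof (cases "c = 0\<^sub>v n")
      case True
      then show ?thesis using indep[OF G cd rs x] unfolding c_def by simp
    next
      case False
      have W: "{L i | i. i < n \<and> c $ i \<noteq> 0} \<subseteq> {..<s} - X"
        using z Lf unfolding c_def J_def by auto
      have fX: "finite X" using X finite_subset by blast
      have "card ({..<s} - X) = m" using X fX ms by (simp add: card_Diff_subset)
      then have lw: "labelweight n L c \<le> m" unfolding labelweight_def
        using card_mono[OF _ W] by simp
      have lws: "labelweight n L c' \<le> s" for c' :: "'a vec"
      proof -
        have "{L i | i. i < n \<and> c' $ i \<noteq> 0} \<subseteq> {..<s}" using Lf by auto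
        then show ?thesis unfolding labelweight_def using card_mono[of "{..<s}"] by fastforce
      qed
      have fin: "finite {labelweight n L c' | c'. c' \<in> C \<and> c' \<noteq> 0\<^sub>v n}"
        by (rule finite_subset[of _ "{..s}"]) (use lws in auto)
      have "code_labelweight n L C \<le> labelweight n L c"
        unfolding code_labelweight_def by (rule Min_le[OF fin]) (use cC False in auto)
      then show ?thesis using lw clw by simp
    qed
  qed
  have claimB: "k \<le> card (J X)" if X: "X \<subseteq> {..<s}" "card X = s - m" for X
  proof (rule ccontr)
    assume "\<not> k \<le> card (J X)"
    then have N: "card (J X) < k" by simp
    define B where "B = mat\<^sub>r k k (\<lambda>r. if r = k - 1 then 0\<^sub>v k else vec k (\<lambda>q. G $$ (q, pick (J X) r)))"
    have Bc: "B \<in> carrier_mat k k" unfolding B_def by simp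
    have "det B = 0" unfolding B_def by (rule det_row_0) (use kpos in auto)
    then obtain v where v: "v \<in> carrier_vec k" "v \<noteq> 0\<^sub>v k" "B *\<^sub>v v = 0\<^sub>v k"
      using det_0_iff_vec_prod_zero_field[OF Bc] by blast
    have "\<forall>i\<in>J X. (transpose_mat G *\<^sub>v v) $ i = 0"
    proof
      fix i assume i: "i \<in> J X"
      define r where "r = card {a\<in>J X. a < i}"
      have r: "r < card (J X)" "pick (J X) r = i" using pick_inv[OF fJ i] unfolding r_def by auto
      have rk: "r < k" "r \<noteq> k - 1" using r N by auto
      have "(B *\<^sub>v v) $ r = vec k (\<lambda>q. G $$ (q, i)) \<bullet> v" unfolding B_def using rk r v by simp
      also have "\<dots> = (\<Sum>q<k. G $$ (q,i) * v $ q)" using v by (auto simp: scalar_prod_def atLeast0LessThan)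
      also have "\<dots> = (transpose_mat G *\<^sub>v v) $ i" proof -
        have "i < n" using i unfolding J_def by simp
        then show ?thesis using tmv[OF G v(1), of i] by simp
      qed
      finally show "(transpose_mat G *\<^sub>v v) $ i = 0" using v(3) rk by simp
    qed
    then show False using claimA[OF X v(1)] v(2) by simp
  qed
  define f where "f l = card {i. i < n \<and> L i = l}" for l
  have sumf: "sum f X = card (J X)" if "finite X" for X
  proof -
    have e: "J X = (\<Union>l\<in>X. {i. i < n \<and> L i = l})" unfolding J_def by auto
    have "card (\<Union>l\<in>X. {i. i < n \<and> L i = l}) = (\<Sum>l\<in>X. card {i. i < n \<and> L i = l})"
      using that by (intro card_UN_disjoint) auto
    then show ?thesis unfolding f_def e by simp
  qed
  have claimC: "card (J X) = k" if X: "X \<subseteq> {..<s}" "card X = s - m" for X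
  proof -
    have tot: "sum f {..<s} = j * card {..<s}"
    proof -
      have "J {..<s} = {..<n}" unfolding J_def using Lf by auto
      then show ?thesis using sumf[of "{..<s}"] unfolding n_def by simp
    qed
    have ge: "j * (s - m) \<le> sum f D" if "D \<subseteq> {..<s}" "card D = s - m" for D
    proof -
      have "finite D" using that finite_subset by blast
      then show ?thesis using claimB[OF that] sumf[of D] unfolding k_def by simp
    qed
    have "sum f X = j * (s - m)"
      by (rule avg[of "{..<s}" "s - m" j f X]) (use X ge tot in \<open>auto simp: k_def intro: finite_subset\<close>)
    moreover have "finite X" using X(1) finite_subset by blast
    ultimately show ?thesis using sumf[of X] unfolding k_def by simp
  qed
  show ?thesis
  proof (intro allI impI)
    fix X assume "X \<subseteq> {..<s} \<and> card X = s - d * t"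
    then have X: "X \<subseteq> {..<s}" "card X = s - m" unfolding m_def by auto
    have LS: "label_submatrix G L X = submatrix G {..<k} (J X)"
      unfolding label_submatrix_def J_def using G by simp
    have cm: "submatrix G {..<k} (J X) \<in> carrier_mat k k" using subm(1)[OF G JS, of X] claimC[OF X] by simp
    have "det (submatrix G {..<k} (J X)) \<noteq> 0"
    proof
      assume "det (submatrix G {..<k} (J X)) = 0"
      then have "det (transpose_mat (submatrix G {..<k} (J X))) = 0" using det_transpose[OF cm] by simp
      then obtain v where v: "v \<in> carrier_vec k" "v \<noteq> 0\<^sub>v k" "transpose_mat (submatrix G {..<k} (J X)) *\<^sub>v v = 0\<^sub>v k"
        using det_0_iff_vec_prod_zero_field[of "transpose_mat (submatrix G {..<k} (J X))" k] cm by auto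
      have "\<forall>i\<in>J X. (transpose_mat G *\<^sub>v v) $ i = 0"
      proof
        fix i assume i: "i \<in> J X"
        define r where "r = card {a\<in>J X. a < i}"
        have r: "r < card (J X)" "pick (J X) r = i" using pick_inv[OF fJ i] unfolding r_def by auto
        have "(transpose_mat (submatrix G {..<k} (J X)) *\<^sub>v v) $ r = (transpose_mat G *\<^sub>v v) $ i"
          using subm(2)[OF G JS v(1) r(1)] r by simp
        then show "(transpose_mat G *\<^sub>v v) $ i = 0" using v(3) r claimC[OF X] by simp
      qed
      then show False using claimA[OF X v(1)] v(2) by simp
    qed
    then show "label_submatrix G L X \<in> carrier_mat (j * (s - d * t)) (j * (s - d * t)) \<and>
           det (label_submatrix G L X) \<noteq> 0" using LS cm unfolding k_def m_def by simp
  qed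
qed

end
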